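(* Let $f:\mathbb{R}^n\to\mathbb{R}$ be a polynomial of degree at most $4$, let $\mu_f$ be its Steklov function, and let $C:=\sum_{i=1}^n\nabla^2 f_{ii}$, where $f_{ii}=\partial^2 f/\partial x_i^2$. Assume the smallest eigenvalue $\lambda_n(C)$ of $C$ is positive, and fix $L>0$. Let $\theta_L:=\min_{x\in B[0,L]}\lambda_n(\nabla^2 f(x))$, where $\lambda_n(\cdot)$ denotes the smallest eigenvalue and $B[0,L]=\{x:\|x\|\le L\}$, and set \[ t_0:=\sqrt{\frac{6|\theta_L|}{\lambda_n(C)}}. \] Then $\mu_f$ is convex over $B[0,L]\times(t_0,+\infty)$, i.e., $\nabla_{xx}\mu_f(x,t)\succeq 0$ for all $(x,t)\in B[0,L]\times(t_0,+\infty)$.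
   Context: The Steklov function of a continuous $f:\mathbb{R}^n\to\mathbb{R}$ is $\mu_f(x,t)=\frac{1}{(2t)^n}\int_{x_n-t}^{x_n+t}\cdots\int_{x_1-t}^{x_1+t} f(\tau)\,d\tau_1\cdots d\tau_n$ for $x\in\mathbb{R}^n$, $t>0$; $\nabla_{xx}\mu_f$ is its Hessian with respect to $x$. For a polynomial of degree at most $4$, $C=\sum_i\nabla^2 f_{ii}$ is a constant symmetric matrix. $\|\cdot\|$ is the Euclidean norm. *)

theory Defs
  imports "HOL-Analysis.Analysis"
begin

definition monomials_le :: "nat \<Rightarrow> ('n::finite \<Rightarrow> nat) set" where
  "monomials_le d = {\<alpha>. (\<Sum>i\<in>UNIV. \<alpha> i) \<le> d}"

definition is_poly_deg_le :: "nat \<Rightarrow> (real^'n::finite \<Rightarrow> real) \<Rightarrow> bool" where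
  "is_poly_deg_le d f \<longleftrightarrow> (\<exists>c :: ('n \<Rightarrow> nat) \<Rightarrow> real.
      f = (\<lambda>x. \<Sum>\<alpha>\<in>monomials_le d. c \<alpha> * (\<Prod>i\<in>UNIV. (x $ i) ^ \<alpha> i)))"

definition partial :: "'n::finite \<Rightarrow> (real^'n \<Rightarrow> real) \<Rightarrow> real^'n \<Rightarrow> real" where
  "partial i g x = deriv (\<lambda>s. g (x + s *\<^sub>R axis i 1)) 0"

definition hessian :: "(real^'n::finite \<Rightarrow> real) \<Rightarrow> real^'n \<Rightarrow> real^'n^'n" where
  "hessian g x = (\<chi> i j. partial i (partial j g) x)"

text \<open>Real eigenvalues of a square matrix, and the smallest one (for symmetric matrices all
  eigenvalues are real and there are finitely many, at least one).\<close>
definition eigenvalues :: "real^'n^'n \<Rightarrow> real set" where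
  "eigenvalues A = {e. \<exists>v. v \<noteq> 0 \<and> A *v v = e *\<^sub>R v}"

definition lambda_min :: "real^'n^'n \<Rightarrow> real" where
  "lambda_min A = Min (eigenvalues A)"

definition psd :: "real^'n^'n \<Rightarrow> bool" where
  "psd A \<longleftrightarrow> (\<forall>v. v \<bullet> (A *v v) \<ge> 0)"

definition steklov :: "(real^'n::finite \<Rightarrow> real) \<Rightarrow> real^'n \<Rightarrow> real \<Rightarrow> real" where
  "steklov f x t = (1 / (2 * t) ^ CARD('n)) *
     integral (cbox (x - (\<chi> i. t)) (x + (\<chi> i. t))) f"

end

theory Submission
  imports Defs
begin


lemma lborel_integral_prod:
  fixes f :: "'a::euclidean_space \<Rightarrow> real \<Rightarrow> real"
  assumes int: "\<And>b. b \<in> Basis \<Longrightarrow> integrable lborel (f b)"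
  shows "integral\<^sup>L lborel (\<lambda>x. \<Prod>b\<in>Basis. f b (x \<bullet> b)) = (\<Prod>b\<in>Basis. integral\<^sup>L lborel (f b))"
proof -
  have m[measurable]: "\<And>b. b \<in> Basis \<Longrightarrow> f b \<in> borel_measurable borel"
    using int by (auto dest: borel_measurable_integrable simp: measurable_lborel1)
  have "integral\<^sup>L lborel (\<lambda>x. \<Prod>b\<in>Basis. f b (x \<bullet> b)) =
     (\<integral>x. (\<Prod>b\<in>Basis. f b ((\<Sum>b\<in>Basis. x b *\<^sub>R b) \<bullet> b)) \<partial>(\<Pi>\<^sub>M b\<in>Basis. lborel))"
    by (subst lborel_eq) (subst integral_distr, auto)
  also have "\<dots> = (\<integral>x. (\<Prod>b\<in>Basis. f b (x b)) \<partial>(\<Pi>\<^sub>M b\<in>Basis. lborel))"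
    by (intro Bochner_Integration.integral_cong refl prod.cong)
       (auto simp: inner_sum_left inner_Basis if_distrib cong: if_cong)
  also have "\<dots> = (\<Prod>b\<in>Basis. integral\<^sup>L lborel (f b))"
  proof -
    interpret P: product_sigma_finite "\<lambda>b::'a. (lborel::real measure)"
      by (simp add: product_sigma_finite_def lborel.sigma_finite_measure_axioms)
    show ?thesis by (rule P.product_integral_prod) (auto intro: int)
  qed
  finally show ?thesis .
qed

lemma prod_Basis_cart:
  "(\<Prod>b\<in>(Basis::(real^'n::finite) set). F b) = (\<Prod>k\<in>UNIV. F (axis k 1))"
  by (simp add: Basis_vec_def UNION_singleton_eq_range prod.reindex axis_eq_axis inj_on_def)

lemma cube_integral_prod:
  fixes h :: "'n::finite \<Rightarrow> real \<Rightarrow> real"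
  assumes cont: "\<And>k. continuous_on UNIV (h k)"
  shows "integral (cbox (-(\<chi> i. t)) (\<chi> i. t)) (\<lambda>z. \<Prod>k\<in>UNIV. h k (z$k))
         = (\<Prod>k\<in>UNIV. integral {-t..t} (h k))"
proof -
  let ?B = "cbox (-(\<chi> i. t)) (\<chi> i. t) :: (real^'n) set"
  define g where "g = (\<lambda>k s. indicator {-t..t} s * h k s)"
  have contI: "continuous_on {-t..t} (h k)" for k using cont continuous_on_subset by blast
  have int1: "integrable lborel (g k)" for k
    using borel_integrable_compact[OF compact_Icc contI[of k]] by (simp add: g_def)
  have e1: "integral\<^sup>L lborel (g k) = integral {-t..t} (h k)" for k
    using set_borel_integral_eq_integral(2)[OF borel_integrable_atLeastAtMost'[OF contI[of k]]]
    by (simp add: set_lebesgue_integral_def g_def)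
  have contP: "continuous_on ?B (\<lambda>z. \<Prod>k\<in>UNIV. h k (z$k))"
    by (intro continuous_intros continuous_on_compose2[OF cont] continuous_on_subset[OF cont]) auto
  have pw: "indicator ?B z *\<^sub>R (\<Prod>k\<in>UNIV. h k (z$k)) = (\<Prod>b\<in>Basis. g (axis_index b) (z \<bullet> b))" for z
  proof -
    have "(\<Prod>b\<in>Basis. g (axis_index b) (z \<bullet> b)) = (\<Prod>k\<in>UNIV. g k (z$k))"
      by (simp add: prod_Basis_cart cart_eq_inner_axis)
    also have "\<dots> = (\<Prod>k\<in>UNIV. indicator {-t..t} (z$k)) * (\<Prod>k\<in>UNIV. h k (z$k))"
      by (simp add: g_def prod.distrib)
    also have "(\<Prod>k\<in>UNIV. indicator {-t..t} (z$k)::real) = indicator ?B z"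
      by (auto simp: indicator_def mem_box_cart prod.neutral)
    finally show ?thesis by simp
  qed
  have "integral ?B (\<lambda>z. \<Prod>k\<in>UNIV. h k (z$k)) = integral UNIV (\<lambda>z. indicator ?B z *\<^sub>R (\<Prod>k\<in>UNIV. h k (z$k)))"
    by (subst integral_restrict_UNIV[symmetric]) (auto intro: integral_cong simp: indicator_def)
  also have "\<dots> = integral\<^sup>L lborel (\<lambda>z. indicator ?B z *\<^sub>R (\<Prod>k\<in>UNIV. h k (z$k)))"
    by (rule integral_lborel[OF borel_integrable_compact[OF compact_cbox contP]])
  also have "\<dots> = integral\<^sup>L lborel (\<lambda>z::real^'n. \<Prod>b\<in>Basis. g (axis_index b) (z \<bullet> b))"
    by (simp only: pw)
  also have "\<dots> = (\<Prod>b\<in>(Basis::(real^'n) set). integral\<^sup>L lborel (g (axis_index b)))"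
    by (rule lborel_integral_prod) (rule int1)
  also have "\<dots> = (\<Prod>k\<in>UNIV. integral {-t..t} (h k))"
    by (simp add: prod_Basis_cart e1)
  finally show ?thesis .
qed



definition monom :: "('n::finite \<Rightarrow> nat) \<Rightarrow> real^'n \<Rightarrow> real" where
  "monom \<alpha> x = (\<Prod>i\<in>UNIV. (x$i)^(\<alpha> i))"
definition dec :: "'n \<Rightarrow> ('n \<Rightarrow> nat) \<Rightarrow> ('n \<Rightarrow> nat)" where
  "dec j \<alpha> = \<alpha>(j := \<alpha> j - 1)"
definition psum :: "'a set \<Rightarrow> ('a \<Rightarrow> real) \<Rightarrow> ('a \<Rightarrow> 'n::finite \<Rightarrow> nat) \<Rightarrow> real^'n \<Rightarrow> real" where
  "psum S d \<tau> x = (\<Sum>a\<in>S. d a * monom (\<tau> a) x)"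

lemma mono_line:
  "monom \<alpha> (w + s *\<^sub>R axis j 1) = (w$j + s)^(\<alpha> j) * (\<Prod>k\<in>UNIV-{j}. (w$k)^(\<alpha> k))"
  unfolding monom_def
  by (subst prod.remove[of UNIV j]) (auto simp: axis_def intro!: prod.cong)

lemma mono_dec_line:
  "monom (dec j \<alpha>) (w + s *\<^sub>R axis j 1) = (w$j + s)^(\<alpha> j - 1) * (\<Prod>k\<in>UNIV-{j}. (w$k)^(\<alpha> k))"
  unfolding mono_line by (auto simp: dec_def intro!: prod.cong)

lemma mono_deriv:
  "((\<lambda>s. monom \<alpha> (w + s *\<^sub>R axis j 1)) has_real_derivative
     real (\<alpha> j) * monom (dec j \<alpha>) (w + s0 *\<^sub>R axis j 1)) (at s0)"
  unfolding mono_dec_line unfolding mono_line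
  by (auto intro!: derivative_eq_intros)

lemma psum_deriv:
  assumes "finite S"
  shows "((\<lambda>s. psum S d \<tau> (w + s *\<^sub>R axis j 1)) has_real_derivative
     psum S (\<lambda>a. d a * real (\<tau> a j)) (\<lambda>a. dec j (\<tau> a)) (w + s0 *\<^sub>R axis j 1)) (at s0)"
  unfolding psum_def
  by (rule DERIV_sum, rule DERIV_cong[OF DERIV_cmult[OF mono_deriv]]) auto

lemma partial_psum:
  assumes "finite S"
  shows "partial j (psum S d \<tau>) = psum S (\<lambda>a. d a * real (\<tau> a j)) (\<lambda>a. dec j (\<tau> a))"
  unfolding partial_def
  by (rule ext, rule DERIV_imp_deriv, rule psum_deriv[OF assms, of _ _ _ _ 0, simplified])

lemma continuous_psum: "continuous_on A (psum S d \<tau>)"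
  unfolding psum_def monom_def by (intro continuous_intros)

lemma int_1d:
  fixes y t :: real
  assumes "t \<ge> 0" "a \<le> 2"
  shows "integral {-t..t} (\<lambda>s. (y+s)^a) = 2*t*(y^a + (if a = 2 then t^2/3 else 0))"
proof -
  have "((\<lambda>s. (y+s)^a) has_integral ((y+t)^(Suc a)/real (Suc a) - (y+(-t))^(Suc a)/real (Suc a))) {-t..t}"
    by (rule fundamental_theorem_of_calculus) (use assms in \<open>auto intro!: derivative_eq_intros simp: has_real_derivative_iff_has_vector_derivative[symmetric] le_Suc_eq numeral_2_eq_2 field_simps\<close>)
  then have "integral {-t..t} (\<lambda>s. (y+s)^a) = (y+t)^(Suc a)/real (Suc a) - (y+(-t))^(Suc a)/real (Suc a)"
    by (rule integral_unique)
  also have "\<dots> = 2*t*(y^a + (if a = 2 then t^2/3 else 0))"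
    using assms(2) by (auto simp: le_Suc_eq numeral_2_eq_2 field_simps power2_eq_square)
  finally show ?thesis .
qed



lemma int_mono_cube:
  fixes x :: "real^'n::finite"
  assumes t: "t \<ge> 0" and deg: "sum \<beta> UNIV \<le> 2"
  shows "integral (cbox (-(\<chi> i. t)) (\<chi> i. t)) (\<lambda>z. monom \<beta> (x+z)) =
    (2*t)^CARD('n) * (monom \<beta> x + t^2/6 * (\<Sum>k\<in>UNIV. real (\<beta> k) * real (dec k \<beta> k) * monom (dec k (dec k \<beta>)) x))"
proof -
  have bk: "\<beta> k \<le> sum \<beta> UNIV" for k by (rule member_le_sum) auto
  have bk2: "\<beta> k \<le> 2" for k using bk[of k] deg by linarith
  have "integral (cbox (-(\<chi> i. t)) (\<chi> i. t)) (\<lambda>z. monom \<beta> (x+z)) =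
        integral (cbox (-(\<chi> i. t)) (\<chi> i. t)) (\<lambda>z. \<Prod>k\<in>UNIV. (\<lambda>s. (x$k + s)^(\<beta> k)) (z$k))"
    by (simp add: monom_def)
  also have "\<dots> = (\<Prod>k\<in>UNIV. integral {-t..t} (\<lambda>s. (x$k + s)^(\<beta> k)))"
    by (rule cube_integral_prod) (intro continuous_intros)
  also have "\<dots> = (\<Prod>k\<in>UNIV. 2*t*((x$k)^(\<beta> k) + (if \<beta> k = 2 then t^2/3 else 0)))"
    using int_1d[OF t bk2] by simp
  also have "\<dots> = (2*t)^CARD('n) * (\<Prod>k\<in>UNIV. (x$k)^(\<beta> k) + (if \<beta> k = 2 then t^2/3 else 0))"
    by (simp add: prod.distrib)
  also have "(\<Prod>k\<in>UNIV. (x$k)^(\<beta> k) + (if \<beta> k = 2 then t^2/3 else 0)) =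
     monom \<beta> x + t^2/6 * (\<Sum>k\<in>UNIV. real (\<beta> k) * real (dec k \<beta> k) * monom (dec k (dec k \<beta>)) x)"
  proof (cases "\<exists>k0. \<beta> k0 = 2")
    case True
    then obtain k0 where k0: "\<beta> k0 = 2" by blast
    have oth: "\<beta> k = 0" if "k \<noteq> k0" for k
    proof -
      have "sum \<beta> {k0, k} \<le> sum \<beta> UNIV" by (rule sum_mono2) auto
      then show ?thesis using that k0 deg by simp
    qed
    have z: "dec k0 (dec k0 \<beta>) = (\<lambda>_. 0)"
      using k0 oth by (auto simp: dec_def fun_eq_iff)
    have m0: "monom (\<lambda>_. 0) x = 1" by (simp add: monom_def)
    have p1: "(\<Prod>k\<in>UNIV. (x$k)^(\<beta> k) + (if \<beta> k = 2 then t^2/3 else 0)) = (x$k0)^2 + t^2/3"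
      by (subst prod.remove[of UNIV k0]) (auto simp: k0 oth intro!: prod.neutral)
    have p2: "monom \<beta> x = (x$k0)^2"
      unfolding monom_def by (subst prod.remove[of UNIV k0]) (auto simp: k0 oth intro!: prod.neutral)
    have p3: "(\<Sum>k\<in>UNIV. real (\<beta> k) * real (dec k \<beta> k) * monom (dec k (dec k \<beta>)) x) = 2"
    proof -
      have d1: "dec k0 \<beta> k0 = 1" using k0 by (simp add: dec_def)
      have r: "(\<Sum>k\<in>UNIV-{k0}. real (\<beta> k) * real (dec k \<beta> k) * monom (dec k (dec k \<beta>)) x) = 0"
        by (rule sum.neutral) (auto simp: oth)
      show ?thesis by (subst sum.remove[of UNIV k0]) (simp_all only: r z m0 d1 k0, simp_all)
    qed
    show ?thesis unfolding p1 p2 p3 by simp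
  next
    case False
    have b1: "\<beta> k \<le> 1" for k
    proof -
      have "\<beta> k \<noteq> 2" using False by blast
      then show ?thesis using bk2[of k] by linarith
    qed
    have "(\<Prod>k\<in>UNIV. (x$k)^(\<beta> k) + (if \<beta> k = 2 then t^2/3 else 0)) = monom \<beta> x"
      using False by (auto simp: monom_def intro!: prod.cong)
    moreover have "(\<Sum>k\<in>UNIV. real (\<beta> k) * real (dec k \<beta> k) * monom (dec k (dec k \<beta>)) x) = 0"
      using b1 by (intro sum.neutral) (auto simp: dec_def le_Suc_eq)
    ultimately show ?thesis by simp
  qed
  finally show ?thesis .
qed



lemma integral_shift_cbox: "integral (cbox (a + c) (b + c)) f = integral (cbox a b) (\<lambda>z. f (c + z))"
  using has_integral_shift_cbox_iff[of f c _ a b] unfolding integral_def o_def integrable_on_def by simp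

lemma steklov_shift:
  "steklov f y t = (1 / (2 * t) ^ CARD('n)) * integral (cbox (-(\<chi> i. t)) (\<chi> i. t)) (\<lambda>z. f (y + z))"
  for f :: "real^'n::finite \<Rightarrow> real"
proof -
  have "integral (cbox (-(\<chi> i. t) + y) ((\<chi> i. t) + y)) f = integral (cbox (-(\<chi> i. t)) (\<chi> i. t)) (\<lambda>z. f (y + z))"
    by (rule integral_shift_cbox)
  moreover have "-(\<chi> i. t) + y = y - (\<chi> i. t)" "(\<chi> i. t) + y = y + (\<chi> i. t)"
    by (simp_all add: algebra_simps)
  ultimately show ?thesis unfolding steklov_def by simp
qed

lemma partial_int_psum:
  fixes d :: "'a \<Rightarrow> real" and \<tau> :: "'a \<Rightarrow> 'n::finite \<Rightarrow> nat"
  assumes S: "finite S"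
  shows "partial j (\<lambda>y. integral (cbox a b) (\<lambda>z. psum S d \<tau> (y+z))) =
         (\<lambda>y. integral (cbox a b) (\<lambda>z. psum S (\<lambda>\<alpha>. d \<alpha> * real (\<tau> \<alpha> j)) (\<lambda>\<alpha>. dec j (\<tau> \<alpha>)) (y+z)))"
proof (rule ext)
  fix y :: "real^'n"
  let ?e = "axis j 1 :: real^'n"
  let ?d' = "\<lambda>\<alpha>. d \<alpha> * real (\<tau> \<alpha> j)" and ?t' = "\<lambda>\<alpha>. dec j (\<tau> \<alpha>)"
  have fx: "((\<lambda>s. psum S d \<tau> (y + s *\<^sub>R ?e + z)) has_field_derivative psum S ?d' ?t' (y + s *\<^sub>R ?e + z)) (at s within UNIV)"
    for s z
  proof -
    have e: "\<And>s. y + s *\<^sub>R ?e + z = (y + z) + s *\<^sub>R ?e" by (simp add: algebra_simps)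
    show ?thesis unfolding e by (rule psum_deriv[OF S])
  qed
  have ctr: "continuous_on A (\<lambda>z. psum S dd tt (y + s *\<^sub>R ?e + z))" for A s dd tt
    by (rule continuous_on_compose2[OF continuous_psum[of UNIV]]) (auto intro!: continuous_intros)
  have cfx: "continuous_on (UNIV \<times> cbox a b) (\<lambda>(s, z). psum S ?d' ?t' (y + s *\<^sub>R ?e + z))"
  proof -
    have "continuous_on (UNIV \<times> cbox a b) (\<lambda>p. psum S ?d' ?t' (y + fst p *\<^sub>R ?e + snd p))"
      by (rule continuous_on_compose2[OF continuous_psum[of UNIV]]) (auto intro!: continuous_intros)
    then show ?thesis by (simp add: case_prod_beta)
  qed
  have D: "((\<lambda>s. integral (cbox a b) (\<lambda>z. psum S d \<tau> (y + s *\<^sub>R ?e + z))) has_field_derivative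
       integral (cbox a b) (\<lambda>z. psum S ?d' ?t' (y + 0 *\<^sub>R ?e + z))) (at 0 within UNIV)"
    by (rule leibniz_rule_field_derivative[OF fx _ cfx]) (auto intro: integrable_continuous ctr)
  show "partial j (\<lambda>y. integral (cbox a b) (\<lambda>z. psum S d \<tau> (y+z))) y =
        integral (cbox a b) (\<lambda>z. psum S ?d' ?t' (y+z))"
    unfolding partial_def using DERIV_imp_deriv[OF D] by simp
qed



lemma sym_inner:
  fixes A :: "real^'n::finite^'n"
  assumes sym: "transpose A = A"
  shows "u \<bullet> (A *v r) = (A *v u) \<bullet> r"
proof -
  have "u \<bullet> (A *v r) = (u v* A) \<bullet> r" by (simp add: dot_lmul_matrix)
  also have "u v* A = A *v u" by (metis sym vector_transpose_matrix)
  finally show ?thesis .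
qed

lemma quad_zero:
  fixes a b :: real
  assumes "a \<ge> 0" "\<And>s. 0 \<le> 2 * s * a + s ^ 2 * b"
  shows "a = 0"
proof (rule ccontr)
  assume "a \<noteq> 0"
  then have a: "a > 0" using assms(1) by simp
  show False
  proof (cases "b \<le> 0")
    case True
    then show False using assms(2)[of "-1"] a by simp
  next
    case False
    have "0 \<le> 2*(-a/b)*a + (-a/b)^2*b" by (rule assms(2))
    also have "\<dots> = - (a^2/b)" using False by (simp add: field_simps power2_eq_square)
    finally show False using a False by (simp add: field_simps)
  qed
qed

lemma eigen_finite:
  fixes A :: "real^'n::finite^'n"
  assumes sym: "transpose A = A"
  shows "finite (eigenvalues A)"
proof -
  define ev where "ev e = (SOME v. v \<noteq> 0 \<and> A *v v = e *\<^sub>R v)" for e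
  have evp: "ev e \<noteq> 0 \<and> A *v ev e = e *\<^sub>R ev e" if "e \<in> eigenvalues A" for e
    using that unfolding eigenvalues_def ev_def by (metis (mono_tags, lifting) mem_Collect_eq someI_ex)
  have inj: "inj_on ev (eigenvalues A)"
  proof (rule inj_onI)
    fix e1 e2 assume e: "e1 \<in> eigenvalues A" "e2 \<in> eigenvalues A" "ev e1 = ev e2"
    then have "e1 *\<^sub>R ev e1 = e2 *\<^sub>R ev e1" using evp by metis
    then show "e1 = e2" using evp[OF e(1)] by (simp add: scaleR_cancel_right)
  qed
  have orth: "pairwise orthogonal (ev ` eigenvalues A)"
  proof (clarsimp simp: pairwise_def)
    fix e1 e2 assume e: "e1 \<in> eigenvalues A" "e2 \<in> eigenvalues A" "ev e1 \<noteq> ev e2"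
    then have ne: "e1 \<noteq> e2" by auto
    have "e1 * (ev e1 \<bullet> ev e2) = (A *v ev e1) \<bullet> ev e2" using evp[OF e(1)] by simp
    also have "\<dots> = ev e1 \<bullet> (A *v ev e2)" using sym_inner[OF sym] by simp
    also have "\<dots> = e2 * (ev e1 \<bullet> ev e2)" using evp[OF e(2)] by simp
    finally show "orthogonal (ev e1) (ev e2)" using ne unfolding orthogonal_def by simp
  qed
  have "0 \<notin> ev ` eigenvalues A" using evp by auto
  then have "independent (ev ` eigenvalues A)" using orth pairwise_orthogonal_independent by blast
  then have "finite (ev ` eigenvalues A)" using independent_bound by blast
  then show ?thesis using finite_imageD inj by blast
qed

lemma quad_expand:
  fixes u r :: "real^'n::finite" and A :: "real^'n^'n"
  assumes s1: "u \<bullet> (A *v r) = (A *v u) \<bullet> r" and s2: "r \<bullet> (A *v u) = (A *v u) \<bullet> r"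
  and m_def: "m = u \<bullet> (A *v u)" and uu: "u \<bullet> u = 1" and r_def: "r = A *v u - m *\<^sub>R u"
  shows "(u + s *\<^sub>R r) \<bullet> (A *v (u + s *\<^sub>R r)) - m * ((u + s *\<^sub>R r) \<bullet> (u + s *\<^sub>R r))
     = 2 * s * (r \<bullet> r) + s ^ 2 * (r \<bullet> (A *v r) - m * (r \<bullet> r))"
proof -
  have e2: "(u + s *\<^sub>R r) \<bullet> (u + s *\<^sub>R r) = 1 + 2 * s * (u \<bullet> r) + s ^ 2 * (r \<bullet> r)"
    unfolding inner_add_left inner_add_right inner_scaleR_left inner_scaleR_right uu
       inner_commute[of r u] power2_eq_square by (simp add: algebra_simps)
  have Aw: "A *v (u + s *\<^sub>R r) = A *v u + s *\<^sub>R (A *v r)"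
    by (simp only: matrix_vector_right_distrib matrix_vector_mult_scaleR)
  have e1: "(u + s *\<^sub>R r) \<bullet> (A *v (u + s *\<^sub>R r)) = m + 2 * s * ((A *v u) \<bullet> r) + s ^ 2 * (r \<bullet> (A *v r))"
    unfolding Aw inner_add_left inner_add_right inner_scaleR_left inner_scaleR_right
        s1 s2 m_def power2_eq_square by (simp add: algebra_simps)
  have e3': "(A *v u - m *\<^sub>R u) \<bullet> r = (A *v u) \<bullet> r - m * (u \<bullet> r)"
    by (simp add: inner_diff_left)
  then have e3: "r \<bullet> r = (A *v u) \<bullet> r - m * (u \<bullet> r)" by (simp only: r_def[symmetric])
  show ?thesis unfolding e1 e2 e3 power2_eq_square by (simp add: algebra_simps)
qed

lemma rayleigh:
  fixes A :: "real^'n::finite^'n"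
  assumes sym: "transpose A = A"
  shows "\<exists>u. norm u = 1 \<and> lambda_min A = u \<bullet> (A *v u) \<and> (\<forall>v. v \<bullet> (A *v v) \<ge> lambda_min A * (v \<bullet> v))"
proof -
  let ?Q = "\<lambda>v. v \<bullet> (A *v v)"
  have cont: "continuous_on (sphere 0 1) ?Q"
    by (intro continuous_intros linear_continuous_on matrix_vector_mul_bounded_linear)
  have ne: "sphere (0::real^'n) 1 \<noteq> {}"
    using vector_choose_size[of 1] by auto
  obtain u where u: "u \<in> sphere 0 1" and umin: "\<And>y. y \<in> sphere 0 1 \<Longrightarrow> ?Q u \<le> ?Q y"
    using continuous_attains_inf[OF compact_sphere ne cont] by blast
  define m where "m = ?Q u"
  have nu: "norm u = 1" using u by simp
  have uu: "u \<bullet> u = 1" using nu by (simp add: dot_square_norm)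
  have Qge: "?Q v \<ge> m * (v \<bullet> v)" for v
  proof (cases "v = 0")
    case True then show ?thesis by simp
  next
    case False
    let ?w = "(1 / norm v) *\<^sub>R v"
    have ws: "?w \<in> sphere 0 1" using False by simp
    have "m \<le> ?Q ?w" unfolding m_def by (rule umin[OF ws])
    also have "?Q ?w = ?Q v / (norm v)^2"
      by (simp add: matrix_vector_mult_scaleR power2_eq_square)
    finally have "m * (norm v)^2 \<le> ?Q v" using False by (simp add: field_simps)
    then show ?thesis by (simp add: power2_norm_eq_inner)
  qed
  define r where "r = A *v u - m *\<^sub>R u"
  have qq: "0 \<le> 2 * s * (r \<bullet> r) + s ^ 2 * (?Q r - m * (r \<bullet> r))" for s
  proof -
    have "0 \<le> ?Q (u + s *\<^sub>R r) - m * ((u + s *\<^sub>R r) \<bullet> (u + s *\<^sub>R r))"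
      using Qge[of "u + s *\<^sub>R r"] by linarith
    also have "\<dots> = 2 * s * (r \<bullet> r) + s ^ 2 * (?Q r - m * (r \<bullet> r))"
      using quad_expand[OF sym_inner[OF sym] inner_commute m_def uu r_def] by simp
    finally show ?thesis .
  qed
  have "r \<bullet> r = 0" by (rule quad_zero[OF _ qq]) simp
  then have "r = 0" by simp
  then have Au: "A *v u = m *\<^sub>R u" unfolding r_def by simp
  have u0: "u \<noteq> 0" using nu by auto
  have mem: "m \<in> eigenvalues A" unfolding eigenvalues_def using Au u0 by blast
  have lb: "e \<ge> m" if "e \<in> eigenvalues A" for e
  proof -
    from that obtain w where w: "w \<noteq> 0" "A *v w = e *\<^sub>R w" unfolding eigenvalues_def by auto
    have "w \<bullet> (A *v w) = e * (w \<bullet> w)" by (simp only: w(2) inner_scaleR_right)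
    then have "m * (w \<bullet> w) \<le> e * (w \<bullet> w)" using Qge[of w] by linarith
    moreover have "w \<bullet> w > 0" using w(1) by simp
    ultimately show ?thesis by (rule mult_right_le_imp_le)
  qed
  have lm: "lambda_min A = m"
    unfolding lambda_min_def by (rule Min_eqI[OF eigen_finite[OF sym] lb mem])
  show ?thesis
  proof (intro exI conjI allI)
    show "norm u = 1" by (rule nu)
    show "lambda_min A = u \<bullet> (A *v u)" using lm m_def by simp
    fix v show "lambda_min A * (v \<bullet> v) \<le> v \<bullet> (A *v v)" using lm Qge[of v] by simp
  qed
qed



fun wt :: "('n \<Rightarrow> nat) \<Rightarrow> 'n list \<Rightarrow> real" where
  "wt \<alpha> [] = 1"
| "wt \<alpha> (a # l) = real (\<alpha> a) * wt (dec a \<alpha>) l"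

fun dl :: "('n \<Rightarrow> nat) \<Rightarrow> 'n list \<Rightarrow> ('n \<Rightarrow> nat)" where
  "dl \<alpha> [] = \<alpha>"
| "dl \<alpha> (a # l) = dl (dec a \<alpha>) l"

fun pl :: "'n list \<Rightarrow> (real^'n::finite \<Rightarrow> real) \<Rightarrow> (real^'n \<Rightarrow> real)" where
  "pl [] g = g"
| "pl (a # l) g = pl l (partial a g)"

lemma pl_psum:
  assumes "finite S"
  shows "pl l (psum S d \<tau>) = psum S (\<lambda>a. d a * wt (\<tau> a) l) (\<lambda>a. dl (\<tau> a) l)"
  using assms by (induction l arbitrary: d \<tau>) (simp_all add: partial_psum mult.assoc)

lemma pl_int:
  assumes "finite S"
  shows "pl l (\<lambda>y. integral (cbox p q) (\<lambda>z. psum S d \<tau> (y+z))) =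
    (\<lambda>y. integral (cbox p q) (\<lambda>z. psum S (\<lambda>a. d a * wt (\<tau> a) l) (\<lambda>a. dl (\<tau> a) l) (y+z)))"
  using assms by (induction l arbitrary: d \<tau>) (simp_all add: partial_int_psum mult.assoc)

lemma dec_comm: "dec a (dec b \<alpha>) = dec b (dec a \<alpha>)"
  by (cases "a = b") (auto simp: dec_def fun_eq_iff)

lemma dec_wt_comm: "real (\<alpha> a) * real (dec a \<alpha> b) = real (\<alpha> b) * real (dec b \<alpha> a)"
  by (cases "a = b") (auto simp: dec_def)

lemma wt_swap: "wt \<alpha> (l1 @ a # b # l2) = wt \<alpha> (l1 @ b # a # l2)"
proof (induction l1 arbitrary: \<alpha>)
  case Nil
  have "wt \<alpha> (a # b # l2) = (real (\<alpha> a) * real (dec a \<alpha> b)) * wt (dec b (dec a \<alpha>)) l2" by simp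
  also have "\<dots> = (real (\<alpha> b) * real (dec b \<alpha> a)) * wt (dec a (dec b \<alpha>)) l2"
    by (simp only: dec_wt_comm dec_comm)
  also have "\<dots> = wt \<alpha> (b # a # l2)" by simp
  finally show ?case by simp
next
  case (Cons c l1)
  then show ?case by simp
qed

lemma dl_swap: "dl \<alpha> (l1 @ a # b # l2) = dl \<alpha> (l1 @ b # a # l2)"
  by (induction l1 arbitrary: \<alpha>) (simp_all add: dec_comm)

lemma wt_append: "wt \<alpha> (l1 @ l2) = wt \<alpha> l1 * wt (dl \<alpha> l1) l2"
  by (induction l1 arbitrary: \<alpha>) simp_all

lemma dl_append: "dl \<alpha> (l1 @ l2) = dl (dl \<alpha> l1) l2"
  by (induction l1 arbitrary: \<alpha>) simp_all

lemma sum_dec: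
  fixes \<alpha> :: "'n::finite \<Rightarrow> nat"
  assumes "\<alpha> a > 0"
  shows "sum (dec a \<alpha>) UNIV + 1 = sum \<alpha> UNIV"
proof -
  have "sum (dec a \<alpha>) UNIV = dec a \<alpha> a + sum (dec a \<alpha>) (UNIV - {a})"
    by (rule sum.remove) auto
  moreover have "sum \<alpha> UNIV = \<alpha> a + sum \<alpha> (UNIV - {a})"
    by (rule sum.remove) auto
  moreover have "sum (dec a \<alpha>) (UNIV - {a}) = sum \<alpha> (UNIV - {a})"
    by (rule sum.cong) (auto simp: dec_def)
  ultimately show ?thesis using assms by (simp add: dec_def)
qed

lemma wt_deg:
  fixes \<alpha> :: "'n::finite \<Rightarrow> nat"
  assumes "wt \<alpha> l \<noteq> 0"
  shows "sum (dl \<alpha> l) UNIV + length l = sum \<alpha> UNIV"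
  using assms
proof (induction l arbitrary: \<alpha>)
  case Nil then show ?case by simp
next
  case (Cons a l)
  then have a: "\<alpha> a > 0" and w: "wt (dec a \<alpha>) l \<noteq> 0" by auto
  have "sum (dl (dec a \<alpha>) l) UNIV + length l = sum (dec a \<alpha>) UNIV" by (rule Cons.IH[OF w])
  then show ?case using sum_dec[of \<alpha> a, OF a] by simp
qed

lemma wt_zero:
  fixes \<alpha> :: "'n::finite \<Rightarrow> nat"
  assumes "wt \<alpha> l \<noteq> 0" "sum \<alpha> UNIV \<le> length l"
  shows "dl \<alpha> l = (\<lambda>_. 0)"
proof -
  have "sum (dl \<alpha> l) UNIV = 0" using wt_deg[OF assms(1)] assms(2) by linarith
  then show ?thesis by (simp add: fun_eq_iff)
qed

lemma mono_zero: "monom (\<lambda>_. 0) x = 1"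
  by (simp add: monom_def)

lemma int_psum:
  fixes x :: "real^'n::finite" and S :: "'a set"
  assumes S: "finite S" and t: "t \<ge> 0"
    and deg: "\<And>a. a \<in> S \<Longrightarrow> dd a \<noteq> 0 \<Longrightarrow> sum (\<tau> a) UNIV \<le> 2"
  shows "integral (cbox (-(\<chi> i. t)) (\<chi> i. t)) (\<lambda>z. psum S dd \<tau> (x+z)) =
    (2*t)^CARD('n) * (psum S dd \<tau> x + t^2/6 * (\<Sum>k\<in>UNIV. psum S (\<lambda>a. dd a * wt (\<tau> a) [k,k]) (\<lambda>a. dl (\<tau> a) [k,k]) x))"
proof -
  let ?B = "cbox (-(\<chi> i. t)) (\<chi> i. t) :: (real^'n) set"
  have ci: "(\<lambda>z. dd a * monom (\<tau> a) (x+z)) integrable_on ?B" for a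
    by (rule integrable_continuous) (auto simp: monom_def intro!: continuous_intros)
  have "integral ?B (\<lambda>z. psum S dd \<tau> (x+z)) = (\<Sum>a\<in>S. integral ?B (\<lambda>z. dd a * monom (\<tau> a) (x+z)))"
    unfolding psum_def by (rule integral_sum[OF S ci])
  also have "\<dots> = (\<Sum>a\<in>S. dd a * ((2*t)^CARD('n) * (monom (\<tau> a) x + t^2/6 *
       (\<Sum>k\<in>UNIV. real (\<tau> a k) * real (dec k (\<tau> a) k) * monom (dec k (dec k (\<tau> a))) x))))"
  proof (rule sum.cong[OF refl])
    fix a assume a: "a \<in> S"
    show "integral ?B (\<lambda>z. dd a * monom (\<tau> a) (x+z)) = dd a * ((2*t)^CARD('n) * (monom (\<tau> a) x + t^2/6 *
       (\<Sum>k\<in>UNIV. real (\<tau> a k) * real (dec k (\<tau> a) k) * monom (dec k (dec k (\<tau> a))) x)))"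
    proof (cases "dd a = 0")
      case True then show ?thesis by simp
    next
      case False
      then show ?thesis using int_mono_cube[OF t deg[OF a False], of x] by simp
    qed
  qed
  also have "\<dots> = (2*t)^CARD('n) * (psum S dd \<tau> x + t^2/6 * (\<Sum>k\<in>UNIV. psum S (\<lambda>a. dd a * wt (\<tau> a) [k,k]) (\<lambda>a. dl (\<tau> a) [k,k]) x))"
    unfolding psum_def
    by (simp add: sum_distrib_left sum_distrib_right sum.distrib algebra_simps sum.swap[of _ UNIV S])
  finally show ?thesis .
qed

lemma quad_bound:
  fixes A :: "real^'n::finite^'n"
  assumes "norm u = 1"
  shows "\<bar>u \<bullet> (A *v u)\<bar> \<le> (\<Sum>i\<in>UNIV. \<Sum>j\<in>UNIV. \<bar>A$i$j\<bar>)"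
proof -
  have ui: "\<bar>u$i\<bar> \<le> 1" for i using component_le_norm_cart[of u i] assms by simp
  have "u \<bullet> (A *v u) = (\<Sum>i\<in>UNIV. \<Sum>j\<in>UNIV. u$i * A$i$j * u$j)"
    by (simp add: inner_vec_def matrix_vector_mult_def sum_distrib_left mult.assoc)
  also have "\<bar>\<dots>\<bar> \<le> (\<Sum>i\<in>UNIV. \<Sum>j\<in>UNIV. \<bar>u$i * A$i$j * u$j\<bar>)"
    by (rule order_trans[OF sum_abs sum_mono]) (rule sum_abs)
  also have "\<dots> \<le> (\<Sum>i\<in>UNIV. \<Sum>j\<in>UNIV. \<bar>A$i$j\<bar>)"
  proof (intro sum_mono)
    fix i j
    have "\<bar>u$i\<bar> * \<bar>A$i$j\<bar> * \<bar>u$j\<bar> \<le> 1 * \<bar>A$i$j\<bar> * 1"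
      by (intro mult_mono ui) auto
    then show "\<bar>u$i * A$i$j * u$j\<bar> \<le> \<bar>A$i$j\<bar>" by (simp add: abs_mult)
  qed
  finally show ?thesis .
qed



lemma perm4: "wt a [j,i,k,k] = wt a [k,k,j,i]"
proof -
  have "wt a [j,i,k,k] = wt a [j,k,i,k]" using wt_swap[of a "[j]" i k "[k]"] by simp
  also have "\<dots> = wt a [k,j,i,k]" using wt_swap[of a "[]" j k "[i,k]"] by simp
  also have "\<dots> = wt a [k,j,k,i]" using wt_swap[of a "[k,j]" i k "[]"] by simp
  also have "\<dots> = wt a [k,k,j,i]" using wt_swap[of a "[k]" j k "[i]"] by simp
  finally show ?thesis .
qed

lemma kk:
  fixes A K P S c :: real
  assumes "A * K = 1"
  shows "A * (K * P + c * (K * S)) = P + c * S"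
proof -
  have "A * (K * P + c * (K * S)) = (A * K) * (P + c * S)" by (simp add: algebra_simps)
  then show ?thesis using assms by simp
qed

lemma hess_pl: "hessian g y $ i $ j = pl [j,i] g y"
  by (simp add: hessian_def)

theorem theorem2:
  fixes f :: "real^'n::finite \<Rightarrow> real" and L :: real
  assumes "is_poly_deg_le 4 f"
    and "lambda_min (\<Sum>i\<in>UNIV. hessian (partial i (partial i f)) 0) > 0"
    and "L > 0"
  shows "\<forall>x t. x \<in> cball 0 L \<and>
           t > sqrt (6 * \<bar>Inf ((\<lambda>y. lambda_min (hessian f y)) ` cball 0 L)\<bar>
                     / lambda_min (\<Sum>i\<in>UNIV. hessian (partial i (partial i f)) 0))
           \<longrightarrow> psd (hessian (\<lambda>y. steklov f y t) x)"
proof (intro allI impI)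
  fix x :: "real^'n" and t :: real
  define C where "C = (\<Sum>i\<in>UNIV. hessian (partial i (partial i f)) 0)"
  define \<theta> where "\<theta> = Inf ((\<lambda>y. lambda_min (hessian f y)) ` cball 0 L)"
  define lC where "lC = lambda_min C"
  assume H: "x \<in> cball 0 L \<and>
           t > sqrt (6 * \<bar>Inf ((\<lambda>y. lambda_min (hessian f y)) ` cball 0 L)\<bar>
                     / lambda_min (\<Sum>i\<in>UNIV. hessian (partial i (partial i f)) 0))"
  then have xL: "x \<in> cball 0 L" and tgt: "t > sqrt (6 * \<bar>\<theta>\<bar> / lC)"
    by (simp_all add: \<theta>_def lC_def C_def)
  have lCpos: "lC > 0" using assms(2) by (simp add: lC_def C_def)
  let ?M = "monomials_le 4 :: ('n \<Rightarrow> nat) set"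
  obtain c where fc: "f = (\<lambda>x. \<Sum>\<alpha>\<in>?M. c \<alpha> * (\<Prod>i\<in>UNIV. (x $ i) ^ \<alpha> i))"
    using assms(1) unfolding is_poly_deg_le_def by blast
  have finM: "finite ?M"
  proof -
    have "?M \<subseteq> PiE UNIV (\<lambda>_. {..4::nat})"
    proof
      fix \<alpha> assume "\<alpha> \<in> ?M"
      then have s: "sum \<alpha> UNIV \<le> 4" by (simp add: monomials_le_def)
      have "\<alpha> i \<le> 4" for i using member_le_sum[of i UNIV \<alpha>] s by simp
      then show "\<alpha> \<in> PiE UNIV (\<lambda>_. {..4::nat})" by auto
    qed
    then show ?thesis by (rule finite_subset) (rule finite_PiE, auto)
  qed
  have degM: "sum \<alpha> UNIV \<le> 4" if "\<alpha> \<in> ?M" for \<alpha> using that by (simp add: monomials_le_def)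
  have fp: "f = psum ?M c (\<lambda>a. a)" by (simp add: fc psum_def monom_def fun_eq_iff)
  have Hf: "hessian f y $ i $ j = psum ?M (\<lambda>a. c a * wt a [j,i]) (\<lambda>a. dl a [j,i]) y" for y i j
    using pl_psum[OF finM, of "[j,i]" c "\<lambda>a. a"] by (simp add: hess_pl fp)
  have sw: "wt a [j,i] = wt a [i,j]" "dl a [j,i] = dl a [i,j]" for a i j
    using wt_swap[of a "[]" j i "[]"] dl_swap[of a "[]" j i "[]"] by (simp_all only: append_Nil)
  have hs: "hessian f y $ j $ i = hessian f y $ i $ j" for y i j
    unfolding Hf by (simp only: sw)
  have Hsym: "transpose (hessian f y) = hessian f y" for y
    by (simp add: vec_eq_iff transpose_def hs)
  have P4: "partial i (partial j (partial k (partial k f))) = psum ?M (\<lambda>a. c a * wt a [k,k,j,i]) (\<lambda>a. dl a [k,k,j,i])" for i j k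
    using pl_psum[OF finM, of "[k,k,j,i]" c "\<lambda>a. a"] by (simp add: fp)
  have Cij: "C $ i $ j = (\<Sum>k\<in>UNIV. psum ?M (\<lambda>a. c a * wt a [k,k,j,i]) (\<lambda>a. dl a [k,k,j,i]) 0)" for i j
    by (simp add: C_def hessian_def P4)
  have sw4: "wt a [k,k,j,i] = wt a [k,k,i,j]" "dl a [k,k,j,i] = dl a [k,k,i,j]" for a i j k
    using wt_swap[of a "[k,k]" j i "[]"] dl_swap[of a "[k,k]" j i "[]"] by (simp_all only: append.simps)
  have cs: "C $ j $ i = C $ i $ j" for i j
    unfolding Cij by (simp only: sw4)
  have Csym: "transpose C = C"
    by (simp add: vec_eq_iff transpose_def cs)
  have t0: "t > 0" using tgt by (meson le_less_trans real_sqrt_ge_zero divide_nonneg_pos lCpos abs_ge_zero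
       mult_nonneg_nonneg zero_le_numeral less_imp_le)
  define K where "K = 1 / (2 * t) ^ CARD('n)"
  have K2: "(2*t)^CARD('n) * K = 1" using t0 by (simp add: K_def)
  let ?B = "cbox (-(\<chi> i. t)) (\<chi> i. t) :: (real^'n) set"
  have Fst: "(\<lambda>y. steklov f y t) = (\<lambda>y. integral ?B (\<lambda>z. psum ?M (\<lambda>a. K * c a) (\<lambda>a. a) (y+z)))"
  proof (rule ext)
    fix y
    have "steklov f y t = K * integral ?B (\<lambda>z. f (y+z))" by (simp add: steklov_shift K_def)
    also have "\<dots> = integral ?B (\<lambda>z. K * f (y+z))" by simp
    also have "(\<lambda>z. K * f (y+z)) = (\<lambda>z. psum ?M (\<lambda>a. K * c a) (\<lambda>a. a) (y+z))"
      by (simp add: fp psum_def sum_distrib_left mult.assoc fun_eq_iff)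
    finally show "steklov f y t = integral ?B (\<lambda>z. psum ?M (\<lambda>a. K * c a) (\<lambda>a. a) (y+z))" .
  qed
  have HF: "hessian (\<lambda>y. steklov f y t) x $ i $ j = hessian f x $ i $ j + t^2/6 * C $ i $ j" for i j
  proof -
    have "hessian (\<lambda>y. steklov f y t) x $ i $ j =
          integral ?B (\<lambda>z. psum ?M (\<lambda>a. K * c a * wt a [j,i]) (\<lambda>a. dl a [j,i]) (x+z))"
      unfolding hess_pl Fst pl_int[OF finM] by simp
    also have "\<dots> = (2*t)^CARD('n) * (psum ?M (\<lambda>a. K * c a * wt a [j,i]) (\<lambda>a. dl a [j,i]) x + t^2/6 *
        (\<Sum>k\<in>UNIV. psum ?M (\<lambda>a. K * c a * wt a [j,i] * wt (dl a [j,i]) [k,k]) (\<lambda>a. dl (dl a [j,i]) [k,k]) x))"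
    proof (rule int_psum[OF finM])
      show "0 \<le> t" using t0 by simp
      fix a assume a: "a \<in> ?M" "K * c a * wt a [j,i] \<noteq> 0"
      then have "wt a [j,i] \<noteq> 0" by auto
      from wt_deg[OF this] degM[OF a(1)] show "sum (dl a [j,i]) UNIV \<le> 2" by simp
    qed
    also have "\<dots> = psum ?M (\<lambda>a. c a * wt a [j,i]) (\<lambda>a. dl a [j,i]) x + t^2/6 *
        (\<Sum>k\<in>UNIV. psum ?M (\<lambda>a. c a * wt a [k,k,j,i]) (\<lambda>a. dl a [k,k,j,i]) 0)"
    proof -
      have e1: "psum S (\<lambda>a. K * g a) tt x = K * psum S g tt x" for S :: "('n \<Rightarrow> nat) set" and g tt
        by (simp add: psum_def sum_distrib_left mult.assoc)
      have e2: "psum ?M (\<lambda>a. c a * wt a [j,i] * wt (dl a [j,i]) [k,k]) (\<lambda>a. dl (dl a [j,i]) [k,k]) x =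
                psum ?M (\<lambda>a. c a * wt a [k,k,j,i]) (\<lambda>a. dl a [k,k,j,i]) 0" for k
        unfolding psum_def
      proof (rule sum.cong[OF refl])
        fix a assume a: "a \<in> ?M"
        have w: "wt a [j,i] * wt (dl a [j,i]) [k,k] = wt a [k,k,j,i]"
          using wt_append[of a "[j,i]" "[k,k]"] perm4[of a j i k] by simp
        have d: "dl (dl a [j,i]) [k,k] = dl a [j,i,k,k]" using dl_append[of a "[j,i]" "[k,k]"] by simp
        have "c a * wt a [j,i] * wt (dl a [j,i]) [k,k] * monom (dl (dl a [j,i]) [k,k]) x =
              c a * (wt a [j,i] * wt (dl a [j,i]) [k,k]) * monom (dl (dl a [j,i]) [k,k]) x"
          by (simp only: mult.assoc)
        also have "\<dots> = c a * wt a [k,k,j,i] * monom (dl a [j,i,k,k]) x"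
          by (simp only: w d)
        also have "\<dots> = c a * wt a [k,k,j,i] * monom (dl a [k,k,j,i]) 0"
        proof (cases "wt a [k,k,j,i] = 0")
          case True then show ?thesis by (simp only: mult_zero_right mult_zero_left)
        next
          case False
          have z1: "dl a [k,k,j,i] = (\<lambda>_. 0)" by (rule wt_zero[OF False]) (use degM[OF a] in simp)
          have F2: "wt a [j,i,k,k] \<noteq> 0" using False perm4[of a j i k] by simp
          have z2: "dl a [j,i,k,k] = (\<lambda>_. 0)" by (rule wt_zero[OF F2]) (use degM[OF a] in simp)
          show ?thesis by (simp only: z1 z2 mono_zero)
        qed
        finally show "c a * wt a [j,i] * wt (dl a [j,i]) [k,k] * monom (dl (dl a [j,i]) [k,k]) x =
              c a * wt a [k,k,j,i] * monom (dl a [k,k,j,i]) 0" .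
      qed
      have lam1: "(\<lambda>a. K * c a * wt a [j,i]) = (\<lambda>a. K * (c a * wt a [j,i]))" by (simp only: mult.assoc)
      have lam2: "(\<lambda>a. K * c a * wt a [j,i] * wt (dl a [j,i]) [k,k]) = (\<lambda>a. K * (c a * wt a [j,i] * wt (dl a [j,i]) [k,k]))" for k
        by (simp only: mult.assoc)
      show ?thesis unfolding lam1 lam2 e1 e2 sum_distrib_left[symmetric] by (rule kk[OF K2])
    qed
    finally show ?thesis by (simp add: Hf Cij)
  qed
  have HFm: "hessian (\<lambda>y. steklov f y t) x = hessian f x + (t^2/6) *\<^sub>R C"
    by (simp add: vec_eq_iff HF)
  define g where "g y = (\<Sum>i\<in>UNIV. \<Sum>j\<in>UNIV. \<bar>hessian f y $ i $ j\<bar>)" for y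
  have gc: "continuous_on (cball 0 L) g"
    unfolding g_def Hf by (intro continuous_intros continuous_psum)
  have ne: "cball (0::real^'n) L \<noteq> {}" using assms(3) by simp
  obtain ym where ym: "\<And>y. y \<in> cball 0 L \<Longrightarrow> g y \<le> g ym"
    using continuous_attains_sup[OF compact_cball ne gc] by blast
  have lbd: "lambda_min (hessian f y) \<ge> - g ym" if "y \<in> cball 0 L" for y
  proof -
    obtain u where u: "norm u = 1" "lambda_min (hessian f y) = u \<bullet> (hessian f y *v u)"
      using rayleigh[OF Hsym[of y]] by blast
    have "\<bar>u \<bullet> (hessian f y *v u)\<bar> \<le> g y" unfolding g_def by (rule quad_bound[OF u(1)])
    then show ?thesis using u(2) ym[OF that] by linarith
  qed
  have bdd: "bdd_below ((\<lambda>y. lambda_min (hessian f y)) ` cball 0 L)"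
    by (rule bdd_belowI2[of _ "- g ym"]) (rule lbd)
  have thx: "\<theta> \<le> lambda_min (hessian f x)"
    unfolding \<theta>_def by (rule cInf_lower[OF imageI[OF xL] bdd])
  have X0: "0 \<le> 6 * \<bar>\<theta>\<bar> / lC" using lCpos by simp
  have "6 * \<bar>\<theta>\<bar> / lC = (sqrt (6 * \<bar>\<theta>\<bar> / lC))^2" using X0 by simp
  also have "\<dots> < t^2" using tgt X0 by (intro power_strict_mono) auto
  finally have "6 * \<bar>\<theta>\<bar> / lC < t^2" .
  then have tl: "6 * \<bar>\<theta>\<bar> < t^2 * lC" using lCpos by (simp add: pos_divide_less_eq)
  show "psd (hessian (\<lambda>y. steklov f y t) x)"
    unfolding psd_def
  proof
    fix v :: "real^'n"
    obtain u1 where r1: "\<forall>v. v \<bullet> (hessian f x *v v) \<ge> lambda_min (hessian f x) * (v \<bullet> v)"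
      using rayleigh[OF Hsym[of x]] by blast
    obtain u2 where r2: "\<forall>v. v \<bullet> (C *v v) \<ge> lC * (v \<bullet> v)"
      using rayleigh[OF Csym] unfolding lC_def by blast
    have eq: "v \<bullet> (hessian (\<lambda>y. steklov f y t) x *v v) = v \<bullet> (hessian f x *v v) + t^2/6 * (v \<bullet> (C *v v))"
      unfolding HFm by (simp add: matrix_vector_mult_add_rdistrib inner_add_right scaleR_matrix_vector_assoc[symmetric])
    have vv: "v \<bullet> v \<ge> 0" by simp
    have a1: "v \<bullet> (hessian f x *v v) \<ge> \<theta> * (v \<bullet> v)"
      using r1 mult_right_mono[OF thx vv] by (meson order_trans)
    have a2: "t^2/6 * (v \<bullet> (C *v v)) \<ge> t^2/6 * (lC * (v \<bullet> v))"
      using r2 by (intro mult_left_mono) auto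
    have "\<theta> + t^2 * lC / 6 \<ge> 0" using tl by (cases "\<theta> \<ge> 0") (auto simp: field_simps)
    then have a3: "(v \<bullet> v) * (\<theta> + t^2 * lC / 6) \<ge> 0" using vv by simp
    show "0 \<le> v \<bullet> (hessian (\<lambda>y. steklov f y t) x *v v)"
      unfolding eq using a1 a2 a3 by (simp add: algebra_simps)
  qed
qed


end
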